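(* Let $(\mathfrak M,w)=(W,R,V,w)$ be a pointed model, and let $Unr_w(\mathfrak M)=(W',R',V')$ and $Unr^{re}_w(\mathfrak M)=(W',R^*,V')$ be its unravelling and reflexive unravelling from $w$. Then: (1) for every $\varphi\in Form$ and $(s_0,\dots,s_n)\in W'$: $Unr_w(\mathfrak M),(s_0,\dots,s_n)\models\varphi$ iff $\mathfrak M,s_n\models\varphi$; (2) if $R$ is reflexive, then for every $\varphi\in Form$ and $(s_0,\dots,s_n)\in W'$: $Unr^{re}_w(\mathfrak M),(s_0,\dots,s_n)\models\varphi$ iff $\mathfrak M,s_n\models\varphi$; (3) if $\mathfrak M\in\mathcal D_{P-}$, then $Unr_w(\mathfrak M)$ is an interpretation; (4) if $R$ is reflexive, then $Unr^{re}_w(\mathfrak M)$ is an interpretation with reflexive relation.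
   Context: $Form$: $\varphi::=p\mid\bot\mid(\varphi\wedge\varphi)\mid(\varphi\to\varphi)$ over a countable set $P0$. A model is $(W,R,V)$ with $W\neq\emptyset$, $R\subseteq W\times W$, $V:P0\to\wp(W)$. Satisfaction: $\bot$ never true; $p$ true at $s$ iff $s\in V(p)$; $\wedge$ pointwise; $\mathfrak M,s\models\varphi\to\psi$ iff for all $t$ with $sRt$, $\mathfrak M,t\models\varphi$ implies $\mathfrak M,t\models\psi$. For $X\subseteq W$: $-X=W\setminus X$, $R[X]=\{t:\exists s\in X,\ sRt\}$, $R^\Box(X)=\{s:\forall t\,(sRt\Rightarrow t\in X)\}$. A proposition of $(W,R)$ is $X\subseteq W$ with $R[X]\cap R^\Box(R[X])\subseteq X$; an interpretation is a model with every $V(p)$ a proposition. $\mathcal D_{P-}$ is the class of models with $V(p)\subseteq R^\Box(-R^\Box(\emptyset)\cup V(p))$ for all $p\in P0$. Unravelling: $W'$ is the set of finite sequences $(s_0,\dots,s_n)$, $n\in\mathbb N$, of elements of $W$ with $s_0=w$ and $s_iRs_{i+1}$ for $0\le i<n$; $(s_0,\dots,s_n)R'(t_0,\dots,t_m)$ iff $m=n+1$ and $(t_0,\dots,t_n)=(s_0,\dots,s_n)$; $V'(p)=\{(s_0,\dots,s_n)\in W':s_n\in V(p)\}$. $R^*$ is the reflexive closure of $R'$. *)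

theory Defs
  imports Main "HOL-Library.Countable"
begin

datatype 'p form = Var 'p | Bot | Conj "'p form" "'p form" | Imp "'p form" "'p form"

definition is_model :: "'w set \<Rightarrow> ('w \<times> 'w) set \<Rightarrow> ('p \<Rightarrow> 'w set) \<Rightarrow> bool" where
  "is_model W R V \<longleftrightarrow> W \<noteq> {} \<and> R \<subseteq> W \<times> W \<and> (\<forall>p. V p \<subseteq> W)"

fun sat :: "('w \<times> 'w) set \<Rightarrow> ('p \<Rightarrow> 'w set) \<Rightarrow> 'w \<Rightarrow> 'p form \<Rightarrow> bool" where
  "sat R V s (Var p) \<longleftrightarrow> s \<in> V p"
| "sat R V s Bot \<longleftrightarrow> False"
| "sat R V s (Conj a b) \<longleftrightarrow> sat R V s a \<and> sat R V s b"
| "sat R V s (Imp a b) \<longleftrightarrow> (\<forall>t. (s, t) \<in> R \<longrightarrow> sat R V t a \<longrightarrow> sat R V t b)"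

text \<open>R[X] and the box operator R^Box(X) relative to W; complement -X = W - X.\<close>
definition img :: "('w \<times> 'w) set \<Rightarrow> 'w set \<Rightarrow> 'w set" where
  "img R X = {t. \<exists>s\<in>X. (s, t) \<in> R}"

definition boxR :: "'w set \<Rightarrow> ('w \<times> 'w) set \<Rightarrow> 'w set \<Rightarrow> 'w set" where
  "boxR W R X = {s \<in> W. \<forall>t. (s, t) \<in> R \<longrightarrow> t \<in> X}"

definition is_proposition :: "'w set \<Rightarrow> ('w \<times> 'w) set \<Rightarrow> 'w set \<Rightarrow> bool" where
  "is_proposition W R X \<longleftrightarrow> X \<subseteq> W \<and> img R X \<inter> boxR W R (img R X) \<subseteq> X"

definition is_interpretation :: "'w set \<Rightarrow> ('w \<times> 'w) set \<Rightarrow> ('p \<Rightarrow> 'w set) \<Rightarrow> bool" where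
  "is_interpretation W R V \<longleftrightarrow> is_model W R V \<and> (\<forall>p. is_proposition W R (V p))"

definition in_DPminus :: "'w set \<Rightarrow> ('w \<times> 'w) set \<Rightarrow> ('p \<Rightarrow> 'w set) \<Rightarrow> bool" where
  "in_DPminus W R V \<longleftrightarrow> is_model W R V \<and>
     (\<forall>p. V p \<subseteq> boxR W R ((W - boxR W R {}) \<union> V p))"

definition unr_W :: "('w \<times> 'w) set \<Rightarrow> 'w \<Rightarrow> 'w list set" where
  "unr_W R w = {xs. xs \<noteq> [] \<and> hd xs = w \<and>
                    (\<forall>i. Suc i < length xs \<longrightarrow> (xs ! i, xs ! Suc i) \<in> R)}"

definition unr_R :: "('w \<times> 'w) set \<Rightarrow> 'w \<Rightarrow> ('w list \<times> 'w list) set" where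
  "unr_R R w = {(xs, ys). xs \<in> unr_W R w \<and> ys \<in> unr_W R w \<and>
                    length ys = length xs + 1 \<and> take (length xs) ys = xs}"

definition unr_V :: "('w \<times> 'w) set \<Rightarrow> ('p \<Rightarrow> 'w set) \<Rightarrow> 'w \<Rightarrow> 'p \<Rightarrow> 'w list set" where
  "unr_V R V w p = {xs \<in> unr_W R w. last xs \<in> V p}"

definition unr_Rre :: "('w \<times> 'w) set \<Rightarrow> 'w \<Rightarrow> ('w list \<times> 'w list) set" where
  "unr_Rre R w = unr_R R w \<union> Id_on (unr_W R w)"

end

theory Submission
  imports Defs
begin

lemma unrW_snoc:
  assumes "xs \<noteq> []"
  shows "(xs @ [t] \<in> unr_W R w) \<longleftrightarrow> (xs \<in> unr_W R w \<and> (last xs, t) \<in> R)"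
proof
  assume a: "xs @ [t] \<in> unr_W R w"
  have "xs \<in> unr_W R w"
    unfolding unr_W_def
  proof (intro CollectI conjI allI impI)
    show "xs \<noteq> []" by fact
    show "hd xs = w" using a assms by (auto simp: unr_W_def)
    fix i assume "Suc i < length xs"
    with a show "(xs ! i, xs ! Suc i) \<in> R"
      unfolding unr_W_def by (auto simp: nth_append dest!: spec[of _ i])
  qed
  moreover have "(last xs, t) \<in> R"
  proof -
    obtain n where n: "length xs = Suc n" using assms by (cases xs) auto
    from a have "((xs@[t]) ! n, (xs@[t]) ! Suc n) \<in> R"
      unfolding unr_W_def using n by auto
    thus ?thesis using n assms by (simp add: nth_append last_conv_nth)
  qed
  ultimately show "xs \<in> unr_W R w \<and> (last xs, t) \<in> R" by blast
next
  assume a: "xs \<in> unr_W R w \<and> (last xs, t) \<in> R"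
  show "xs @ [t] \<in> unr_W R w"
    unfolding unr_W_def
  proof (intro CollectI conjI allI impI)
    show "xs @ [t] \<noteq> []" by simp
    show "hd (xs @ [t]) = w" using a assms by (auto simp: unr_W_def)
    fix i assume i: "Suc i < length (xs @ [t])"
    show "((xs @ [t]) ! i, (xs @ [t]) ! Suc i) \<in> R"
    proof (cases "Suc i < length xs")
      case True thus ?thesis using a by (auto simp: unr_W_def nth_append)
    next
      case False
      hence "Suc i = length xs" using i by simp
      hence "i = length xs - 1" and "\<not> Suc i < length xs" by simp_all
      thus ?thesis using a assms \<open>Suc i = length xs\<close> by (simp add: nth_append last_conv_nth)
    qed
  qed
qed

lemma unrW_ne: "xs \<in> unr_W R w \<Longrightarrow> xs \<noteq> []" by (simp add: unr_W_def)

lemma unrR_iff: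
  "(xs, ys) \<in> unr_R R w \<longleftrightarrow> xs \<in> unr_W R w \<and> (\<exists>t. ys = xs @ [t] \<and> (last xs, t) \<in> R)"
proof
  assume a: "(xs, ys) \<in> unr_R R w"
  hence x: "xs \<in> unr_W R w" and y: "ys \<in> unr_W R w" and l: "length ys = length xs + 1"
    and tk: "take (length xs) ys = xs" by (auto simp: unr_R_def)
  have "drop (length xs) ys = [last ys]"
    using l y by (metis One_nat_def add_diff_cancel_left' append_take_drop_id diff_add_inverse
       length_0_conv length_Suc_conv length_drop last_appendR last_snoc unrW_ne)
  hence ys: "ys = xs @ [last ys]" using tk by (metis append_take_drop_id)
  with y x have "(last xs, last ys) \<in> R" using unrW_snoc unrW_ne by metis
  with ys x show "xs \<in> unr_W R w \<and> (\<exists>t. ys = xs @ [t] \<and> (last xs, t) \<in> R)" by blast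
next
  assume "xs \<in> unr_W R w \<and> (\<exists>t. ys = xs @ [t] \<and> (last xs, t) \<in> R)"
  then obtain t where x: "xs \<in> unr_W R w" and ys: "ys = xs @ [t]" and r: "(last xs, t) \<in> R"
    by blast
  have "ys \<in> unr_W R w" using unrW_snoc[OF unrW_ne[OF x]] x r ys by blast
  thus "(xs, ys) \<in> unr_R R w" using x ys unfolding unr_R_def by simp
qed

lemma unrW_last:
  assumes "xs \<in> unr_W R w" "R \<subseteq> W \<times> W" "w \<in> W"
  shows "last xs \<in> W"
proof (cases "length xs = 1")
  case True
  then obtain a where "xs = [a]" by (metis One_nat_def length_0_conv length_Suc_conv)
  thus ?thesis using assms by (auto simp: unr_W_def)
next
  case False
  have "xs \<noteq> []" using assms(1) by (rule unrW_ne)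
  hence "length xs \<noteq> 0" by simp
  define n where "n = length xs - 2"
  have n: "length xs = Suc (Suc n)" using False \<open>length xs \<noteq> 0\<close> unfolding n_def by arith
  hence "(xs ! n, xs ! Suc n) \<in> R" using assms(1) by (auto simp: unr_W_def)
  hence "xs ! Suc n \<in> W" using assms(2) by blast
  moreover have "last xs = xs ! Suc n" using n \<open>xs \<noteq> []\<close> by (simp add: last_conv_nth)
  ultimately show ?thesis by simp
qed

theorem mainTheorem15:
  fixes W :: "'w set" and R :: "('w \<times> 'w) set" and V :: "'p::countable \<Rightarrow> 'w set" and w :: 'w
  assumes "is_model W R V" and "w \<in> W"
  shows "(\<forall>(\<phi>::'p form). \<forall>xs\<in>unr_W R w.
            sat (unr_R R w) (unr_V R V w) xs \<phi> \<longleftrightarrow> sat R V (last xs) \<phi>)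
       \<and> (refl_on W R \<longrightarrow> (\<forall>(\<phi>::'p form). \<forall>xs\<in>unr_W R w.
            sat (unr_Rre R w) (unr_V R V w) xs \<phi> \<longleftrightarrow> sat R V (last xs) \<phi>))
       \<and> (in_DPminus W R V \<longrightarrow> is_interpretation (unr_W R w) (unr_R R w) (unr_V R V w))
       \<and> (refl_on W R \<longrightarrow> is_interpretation (unr_W R w) (unr_Rre R w) (unr_V R V w)
                          \<and> refl_on (unr_W R w) (unr_Rre R w))"
proof -
  have RW: "R \<subseteq> W \<times> W" using assms(1) by (simp add: is_model_def)
  have snoc: "\<And>xs t. xs \<in> unr_W R w \<Longrightarrow> (last xs, t) \<in> R \<Longrightarrow> xs @ [t] \<in> unr_W R w"
    using unrW_snoc unrW_ne by metis
  have P1: "\<forall>xs\<in>unr_W R w. sat (unr_R R w) (unr_V R V w) xs \<phi> \<longleftrightarrow> sat R V (last xs) \<phi>"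
    for \<phi> :: "'p form"
  proof (induction \<phi>)
    case (Imp a b)
    show ?case
    proof
      fix xs assume xs: "xs \<in> unr_W R w"
      show "sat (unr_R R w) (unr_V R V w) xs (Imp a b) \<longleftrightarrow> sat R V (last xs) (Imp a b)"
        using Imp.IH xs snoc by (auto simp: unrR_iff)
    qed
  qed (auto simp: unr_V_def)
  have P2: "\<forall>xs\<in>unr_W R w. sat (unr_Rre R w) (unr_V R V w) xs \<phi> \<longleftrightarrow> sat R V (last xs) \<phi>"
    if rf: "refl_on W R" for \<phi> :: "'p form"
  proof (induction \<phi>)
    case (Imp a b)
    show ?case
    proof
      fix xs assume xs: "xs \<in> unr_W R w"
      have lw: "(last xs, last xs) \<in> R" using unrW_last[OF xs RW assms(2)] rf
        by (simp add: refl_on_def)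
      show "sat (unr_Rre R w) (unr_V R V w) xs (Imp a b) \<longleftrightarrow> sat R V (last xs) (Imp a b)"
        using Imp.IH xs snoc lw by (auto simp: unr_Rre_def unrR_iff Id_on_def)
    qed
  qed (auto simp: unr_V_def)
  have model: "is_model (unr_W R w) (unr_R R w) (unr_V R V w)"
    unfolding is_model_def
  proof (intro conjI)
    have "[w] \<in> unr_W R w" by (simp add: unr_W_def)
    thus "unr_W R w \<noteq> {}" by blast
    show "unr_R R w \<subseteq> unr_W R w \<times> unr_W R w" by (auto simp: unr_R_def)
    show "\<forall>p. unr_V R V w p \<subseteq> unr_W R w" by (auto simp: unr_V_def)
  qed
  have P3: "is_interpretation (unr_W R w) (unr_R R w) (unr_V R V w)"
    if d: "in_DPminus W R V"
    unfolding is_interpretation_def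
  proof (intro conjI allI model)
    fix p
    let ?X = "unr_V R V w p"
    show "is_proposition (unr_W R w) (unr_R R w) ?X"
      unfolding is_proposition_def
    proof (rule conjI[OF _ subsetI])
      show "?X \<subseteq> unr_W R w" by (auto simp: unr_V_def)
      fix ys assume ys: "ys \<in> img (unr_R R w) ?X \<inter> boxR (unr_W R w) (unr_R R w) (img (unr_R R w) ?X)"
      then obtain xs t where xs: "xs \<in> ?X" and yt: "ys = xs @ [t]" and r: "(last xs, t) \<in> R"
        by (auto simp: img_def unrR_iff)
      have xsW: "xs \<in> unr_W R w" using xs by (simp add: unr_V_def)
      have ysW: "ys \<in> unr_W R w" using snoc xsW r yt by simp
      show "ys \<in> ?X"
      proof (cases "\<exists>u. (t, u) \<in> R")
        case True
        then obtain u where u: "(t,u) \<in> R" by blast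
        have "(ys, ys @ [u]) \<in> unr_R R w" using ysW u yt by (simp add: unrR_iff)
        hence "ys @ [u] \<in> img (unr_R R w) ?X" using ys by (auto simp: boxR_def)
        then obtain zs where "zs \<in> ?X" "(zs, ys @ [u]) \<in> unr_R R w" by (auto simp: img_def)
        thus ?thesis by (auto simp: unrR_iff)
      next
        case False
        have tW: "t \<in> W" using r RW by auto
        have "last xs \<in> V p" using xs by (simp add: unr_V_def)
        hence "last xs \<in> boxR W R ((W - boxR W R {}) \<union> V p)"
          using d by (auto simp: in_DPminus_def)
        hence "t \<in> (W - boxR W R {}) \<union> V p" using r by (auto simp: boxR_def)
        moreover have "t \<in> boxR W R {}" using False tW by (auto simp: boxR_def)
        ultimately have "t \<in> V p" by blast
        thus ?thesis using ysW yt by (simp add: unr_V_def)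
      qed
    qed
  qed
  have P4: "is_interpretation (unr_W R w) (unr_Rre R w) (unr_V R V w)
                          \<and> refl_on (unr_W R w) (unr_Rre R w)"
    if rf: "refl_on W R"
  proof
    show "refl_on (unr_W R w) (unr_Rre R w)"
      by (auto simp: refl_on_def unr_Rre_def unr_R_def)
    show "is_interpretation (unr_W R w) (unr_Rre R w) (unr_V R V w)"
      unfolding is_interpretation_def
    proof (intro conjI allI)
      show "is_model (unr_W R w) (unr_Rre R w) (unr_V R V w)"
        using model by (auto simp: is_model_def unr_Rre_def)
      fix p
      let ?X = "unr_V R V w p"
      show "is_proposition (unr_W R w) (unr_Rre R w) ?X"
        unfolding is_proposition_def
      proof (rule conjI[OF _ subsetI])
        show "?X \<subseteq> unr_W R w" by (auto simp: unr_V_def)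
        fix ys assume ys: "ys \<in> img (unr_Rre R w) ?X \<inter> boxR (unr_W R w) (unr_Rre R w) (img (unr_Rre R w) ?X)"
        then obtain xs where xs: "xs \<in> ?X" and xy: "(xs, ys) \<in> unr_Rre R w"
          by (auto simp: img_def)
        show "ys \<in> ?X"
        proof (cases "ys = xs")
          case True thus ?thesis using xs by simp
        next
          case False
          then obtain t where yt: "ys = xs @ [t]" and r: "(last xs, t) \<in> R"
            and xsW: "xs \<in> unr_W R w"
            using xy by (auto simp: unr_Rre_def unrR_iff)
          have ysW: "ys \<in> unr_W R w" using snoc xsW r yt by simp
          have "t \<in> W" using r RW by auto
          hence tt: "(t, t) \<in> R" using rf by (simp add: refl_on_def)
          have "(ys, ys @ [t]) \<in> unr_Rre R w" using ysW tt yt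
            by (simp add: unr_Rre_def unrR_iff)
          hence "ys @ [t] \<in> img (unr_Rre R w) ?X" using ys by (auto simp: boxR_def)
          then obtain zs where zs: "zs \<in> ?X" "(zs, ys @ [t]) \<in> unr_Rre R w"
            by (auto simp: img_def)
          show ?thesis
          proof (cases "zs = ys @ [t]")
            case True
            hence "t \<in> V p" using zs by (simp add: unr_V_def)
            thus ?thesis using ysW yt by (simp add: unr_V_def)
          next
            case False
            hence "zs = ys" using zs by (auto simp: unr_Rre_def unrR_iff)
            thus ?thesis using zs by simp
          qed
        qed
      qed
    qed
  qed
  show ?thesis using P1 P2 P3 P4 by blast
qed

end
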